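(* Let $f_1=f_1^{\mathrm s}+f_1^{\mathrm n}$ and $f_2=f_2^{\mathrm s}+f_2^{\mathrm n}$ be noisy processes (with noise variances $\sigma_1^2,\sigma_2^2>0$). If for every tuple $\mathbf x$ of pairwise distinct inputs $(f_1(x_1),\dots,f_1(x_{|\mathbf x|}))\overset{d}{=}(f_2(x_1),\dots,f_2(x_{|\mathbf x|}))$, then for every such $\mathbf x$ also $f_1^{\mathrm s}(\mathbf x)\overset{d}{=}f_2^{\mathrm s}(\mathbf x)$ and $f_1^{\mathrm n}(\mathbf x)\overset{d}{=}f_2^{\mathrm n}(\mathbf x)$ (where $g(\mathbf x)=(g(x_1),\dots,g(x_{|\mathbf x|}))$).
   Context: A stochastic process $f$ on $\mathbb R$ is called noisy with noise variance $\sigma^2>0$ if $f=f^{\mathrm s}+f^{\mathrm n}$ where $f^{\mathrm s}$ and $f^{\mathrm n}$ are independent processes, $f^{\mathrm s}$ (the smooth part) has continuous sample paths, and $f^{\mathrm n}$ (the noisy part) satisfies $(f^{\mathrm n}(x_1),\dots,f^{\mathrm n}(x_n))\sim\mathcal N(\mathbf 0,\sigma^2\mathbf I_n)$ for every tuple $(x_1,\dots,x_n)$ of pairwise distinct reals. *)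

theory Defs
  imports "HOL-Probability.Probability"
begin

text \<open>A real-valued stochastic process on the real line, defined on a probability
space M, is modelled as f :: real => 'a => real (f x is the random variable at input x).\<close>

definition fin_distr :: "'a measure \<Rightarrow> (real \<Rightarrow> 'a \<Rightarrow> real) \<Rightarrow> nat \<Rightarrow> (nat \<Rightarrow> real) \<Rightarrow> (nat \<Rightarrow> real) measure" where
  "fin_distr M f n x = distr M (PiM {..<n} (\<lambda>_. borel)) (\<lambda>\<omega>. \<lambda>i\<in>{..<n}. f (x i) \<omega>)"

definition noisy_process ::
  "'a measure \<Rightarrow> (real \<Rightarrow> 'a \<Rightarrow> real) \<Rightarrow> (real \<Rightarrow> 'a \<Rightarrow> real) \<Rightarrow> (real \<Rightarrow> 'a \<Rightarrow> real) \<Rightarrow> real \<Rightarrow> bool" where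
  "noisy_process M f fs fn s2 \<longleftrightarrow>
     prob_space M \<and> s2 > 0 \<and>
     (\<forall>x. fs x \<in> borel_measurable M) \<and> (\<forall>x. fn x \<in> borel_measurable M) \<and>
     (\<forall>x. \<forall>\<omega>\<in>space M. f x \<omega> = fs x \<omega> + fn x \<omega>) \<and>
     prob_space.indep_var M (PiM UNIV (\<lambda>_. borel)) (\<lambda>\<omega> x. fs x \<omega>)
                            (PiM UNIV (\<lambda>_. borel)) (\<lambda>\<omega> x. fn x \<omega>) \<and>
     (\<forall>\<omega>\<in>space M. continuous_on UNIV (\<lambda>x. fs x \<omega>)) \<and>
     (\<forall>n x. inj_on x {..<n} \<longrightarrow>
        fin_distr M fn n x = PiM {..<n} (\<lambda>_. density lborel (normal_density 0 (sqrt s2))))"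

end

theory Submission
  imports Defs
begin


lemma np_facts:
  assumes "noisy_process M f fs fn s"
  shows "prob_space M" "s > 0" "\<And>x. fs x \<in> borel_measurable M" "\<And>x. fn x \<in> borel_measurable M"
    "\<And>x \<omega>. \<omega> \<in> space M \<Longrightarrow> f x \<omega> = fs x \<omega> + fn x \<omega>"
    "\<And>\<omega>. \<omega> \<in> space M \<Longrightarrow> continuous_on UNIV (\<lambda>x. fs x \<omega>)"
    "\<And>n x. inj_on x {..<n} \<Longrightarrow> fin_distr M fn n x = PiM {..<n} (\<lambda>_. density lborel (normal_density 0 (sqrt s)))"
  using assms unfolding noisy_process_def by auto

lemma np_f_meas:
  assumes "noisy_process M f fs fn s"
  shows "f x \<in> borel_measurable M"
proof -
  have "(\<lambda>\<omega>. fs x \<omega> + fn x \<omega>) \<in> borel_measurable M"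
    using np_facts[OF assms] by measurable
  then show ?thesis
    by (rule measurable_cong[THEN iffD1, rotated]) (simp add: np_facts(5)[OF assms])
qed

lemma noise_distr1:
  assumes np: "noisy_process M f fs fn s"
  shows "distr M borel (fn y) = density lborel (normal_density 0 (sqrt s))"
proof -
  note F = np_facts[OF np]
  have inj: "inj_on (\<lambda>_::nat. y) {..<1}" by (auto simp: inj_on_def)
  have meas[measurable]: "\<And>x. fn x \<in> borel_measurable M" by (rule F(4))
  have "distr (fin_distr M fn 1 (\<lambda>_. y)) borel (\<lambda>v. v 0) = distr M borel (fn y)"
    unfolding fin_distr_def
    by (subst distr_distr) (auto intro!: distr_cong measurable_restrict simp: comp_def)
  moreover have "distr (fin_distr M fn 1 (\<lambda>_. y)) borel (\<lambda>v. v 0)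
      = distr (PiM {..<1::nat} (\<lambda>_. density lborel (normal_density 0 (sqrt s)))) (density lborel (normal_density 0 (sqrt s))) (\<lambda>v. v 0)"
    apply (subst F(7)[OF inj])
    apply (rule distr_cong)
    apply simp
    apply simp
    apply simp
    done
  moreover have "\<dots> = density lborel (normal_density 0 (sqrt s))"
    by (rule distr_PiM_component) (auto intro!: prob_space_normal_density simp: F(2))
  ultimately show ?thesis by simp
qed

lemma noise_sum:
  assumes np: "noisy_process M f fs fn s" and inj: "inj_on y {..<m}" and m: "m > 0"
  shows "distributed M lborel (\<lambda>\<omega>. \<Sum>k<m. fn (y k) \<omega>) (normal_density 0 (sqrt (real m * s)))"
proof -
  note F = np_facts[OF np]
  interpret prob_space M by (rule F(1))
  have meas[measurable]: "\<And>x. fn x \<in> borel_measurable M" by (rule F(4))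
  have ind: "indep_vars (\<lambda>_. borel) (\<lambda>k. fn (y k)) {..<m}"
  proof (subst indep_vars_iff_distr_eq_PiM')
    show "{..<m} \<noteq> {}" using m by auto
    show "distr M (Pi\<^sub>M {..<m} (\<lambda>_. borel)) (\<lambda>x. \<lambda>i\<in>{..<m}. fn (y i) x) =
      Pi\<^sub>M {..<m} (\<lambda>i. distr M borel (fn (y i)))"
      using F(7)[OF inj] by (simp add: noise_distr1[OF np] fin_distr_def)
  qed auto
  have D: "distributed M lborel (fn (y k)) (normal_density 0 (sqrt s))" for k
    unfolding distributed_def
  proof (intro conjI)
    show "distr M lborel (fn (y k)) = density lborel (\<lambda>x. ennreal (normal_density 0 (sqrt s) x))"
    proof -
      have "distr M lborel (fn (y k)) = distr M borel (fn (y k))" by (rule distr_cong) simp_all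
      then show ?thesis using noise_distr1[OF np, of "y k"] by simp
    qed
  qed auto
  have "distributed M lborel (\<lambda>x. \<Sum>i\<in>{..<m}. fn (y i) x)
      (normal_density (\<Sum>i\<in>{..<m}. 0) (sqrt (\<Sum>i\<in>{..<m}. (sqrt s)\<^sup>2)))"
    by (rule sum_indep_normal[OF _ _ ind]) (use m F(2) D in auto)
  then show ?thesis using F(2) by simp
qed

lemma noise_avg_prob_gen:
  assumes np: "noisy_process M f fs fn s" and inj: "inj_on y {..<N}" and N: "N > 0" and e: "e > 0"
  shows "measure M {\<omega>\<in>space M. e \<le> \<bar>(\<Sum>k<N. fn (y k) \<omega>) / real N\<bar>} \<le> s / (real N * e\<^sup>2)"
proof -
  note F = np_facts[OF np]
  interpret prob_space M by (rule F(1))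
  have meas[measurable]: "\<And>x. fn x \<in> borel_measurable M" by (rule F(4))
  define S where "S = (\<lambda>\<omega>. \<Sum>k<N. fn (y k) \<omega>)"
  have SM[measurable]: "S \<in> borel_measurable M" unfolding S_def by measurable
  have D: "distributed M lborel S (normal_density 0 (sqrt (real N * s)))"
    unfolding S_def by (rule noise_sum[OF np inj N])
  have sp: "0 < sqrt (real N * s)" using F(2) N by simp
  have E: "expectation S = 0" by (rule normal_distributed_expectation[OF sp D])
  have V: "variance S = real N * s"
    using normal_distributed_variance[OF sp D] F(2) by simp
  have I: "integrable M (\<lambda>x. S x ^ 2)"
  proof -
    have "integrable lborel (\<lambda>x. normal_density 0 (sqrt (real N * s)) x * x ^ 2)"
      using integrable_normal_moment[OF sp, where \<mu>=0 and k=2] by simp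
    then show ?thesis
      using distributed_integrable[OF D, of "\<lambda>x. x ^ 2"] by simp
  qed
  have a: "real N * e > 0" using e N by simp
  have C: "prob {x\<in>space M. \<bar>S x - expectation S\<bar> \<ge> real N * e} \<le> variance S / (real N * e)\<^sup>2"
    by (rule Chebyshev_inequality[OF SM I a])
  have iff: "(e \<le> \<bar>t / real N\<bar>) = (real N * e \<le> \<bar>t\<bar>)" for t :: real
    using N by (simp add: abs_divide pos_le_divide_eq mult.commute)
  have seteq: "{\<omega>\<in>space M. e \<le> \<bar>(\<Sum>k<N. fn (y k) \<omega>) / real N\<bar>} = {x\<in>space M. \<bar>S x - expectation S\<bar> \<ge> real N * e}"
    unfolding E iff by (simp add: S_def)
  have eqv: "variance S / (real N * e)\<^sup>2 = s / (real N * e\<^sup>2)"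
    unfolding V using e N by (simp add: power2_eq_square divide_simps)
  show ?thesis unfolding seteq using C eqv by linarith
qed

lemma noise_avg_prob:
  assumes np: "noisy_process M f fs fn s" and inj: "inj_on y {..<Suc m}" and e: "e > 0"
  shows "measure M {\<omega>\<in>space M. e \<le> \<bar>(\<Sum>k<Suc m. fn (y k) \<omega>) / real (Suc m)\<bar>} \<le> s / (real (Suc m) * e\<^sup>2)"
  by (rule noise_avg_prob_gen[OF np inj _ e]) simp

lemma ptwise_to_prob:
  fixes A :: "nat \<Rightarrow> 'a \<Rightarrow> real" and e :: real
  assumes P: "prob_space M" and A[measurable]: "\<And>m. A m \<in> borel_measurable M"
    and conv: "\<And>\<omega>. \<omega> \<in> space M \<Longrightarrow> (\<lambda>m. A m \<omega>) \<longlonglongrightarrow> 0" and e: "e > 0"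
  shows "(\<lambda>m. measure M {\<omega>\<in>space M. e < \<bar>A m \<omega>\<bar>}) \<longlonglongrightarrow> 0"
proof -
  interpret prob_space M by (rule P)
  have Am[measurable]: "\<And>m. A m \<in> borel_measurable M" by (rule A)
  define C where "C m k = {\<omega>\<in>space M. m \<le> k \<and> e < \<bar>A k \<omega>\<bar>}" for m k
  define B where "B m = (\<Union>k. C m k)" for m
  have Cs: "C m k \<in> sets M" for m k
  proof (cases "m \<le> k")
    case True
    then have "C m k = {\<omega>\<in>space M. e < \<bar>A k \<omega>\<bar>}" unfolding C_def by simp
    moreover have "{\<omega>\<in>space M. e < \<bar>A k \<omega>\<bar>} \<in> sets M" by measurable
    ultimately show ?thesis by simp
  next
    case False
    then have "C m k = {}" unfolding C_def by simp
    then show ?thesis by simp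
  qed
  have "B m \<in> sets M" for m unfolding B_def by (rule sets.countable_UN) (use Cs in auto)
  then have Bs: "range B \<subseteq> sets M" by auto
  have Bd: "decseq B" unfolding decseq_def B_def C_def by fastforce
  have Bi: "(\<Inter>m. B m) = {}"
  proof (rule ccontr)
    assume "(\<Inter>m. B m) \<noteq> {}"
    then obtain \<omega> where w: "\<And>m. \<omega> \<in> B m" by blast
    then have sp: "\<omega> \<in> space M" unfolding B_def C_def by auto
    from conv[OF sp] e obtain no where no: "\<And>n. n \<ge> no \<Longrightarrow> norm (A n \<omega> - 0) < e"
      unfolding LIMSEQ_iff by blast
    from w[of no] obtain k where k: "no \<le> k" "e < \<bar>A k \<omega>\<bar>" unfolding B_def C_def by auto
    from no[OF k(1)] have "\<bar>A k \<omega>\<bar> < e" by simp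
    with k(2) show False by simp
  qed
  have L: "(\<lambda>m. measure M (B m)) \<longlonglongrightarrow> 0"
    using finite_Lim_measure_decseq[OF Bs Bd] unfolding Bi by simp
  have sub: "{\<omega> \<in> space M. e < \<bar>A n \<omega>\<bar>} \<subseteq> B n" for n unfolding B_def C_def by auto
  show ?thesis
  proof (rule tendsto_sandwich[OF _ _ tendsto_const L])
    show "\<forall>\<^sub>F n in sequentially. 0 \<le> measure M {\<omega> \<in> space M. e < \<bar>A n \<omega>\<bar>}" by simp
    show "\<forall>\<^sub>F n in sequentially. measure M {\<omega> \<in> space M. e < \<bar>A n \<omega>\<bar>} \<le> measure M (B n)"
      using Bs sub by (intro always_eventually allI finite_measure_mono) auto
  qed
qed

lemma avg_conv:
  assumes np: "noisy_process M f fs fn s"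
    and inj: "\<And>m. inj_on (pt m) {..<Suc m}"
    and bnd: "\<And>m k. k < Suc m \<Longrightarrow> \<bar>pt m k - x0\<bar> \<le> b m" and b: "b \<longlonglongrightarrow> 0"
    and e: "e > 0"
  shows "(\<lambda>m. measure M {\<omega>\<in>space M. e < \<bar>(\<Sum>k<Suc m. f (pt m k) \<omega>) / real (Suc m) - fs x0 \<omega>\<bar>}) \<longlonglongrightarrow> 0"
proof -
  note F = np_facts[OF np]
  interpret prob_space M by (rule F(1))
  have [measurable]: "\<And>x. fn x \<in> borel_measurable M" by (rule F(4))
  have [measurable]: "\<And>x. fs x \<in> borel_measurable M" by (rule F(3))
  have [measurable]: "\<And>x. f x \<in> borel_measurable M" by (rule np_f_meas[OF np])
  define A where "A m \<omega> = (\<Sum>k<Suc m. fs (pt m k) \<omega>) / real (Suc m) - fs x0 \<omega>" for m \<omega>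
  have Am[measurable]: "A m \<in> borel_measurable M" for m unfolding A_def by measurable
  have Ac: "(\<lambda>m. A m \<omega>) \<longlonglongrightarrow> 0" if w: "\<omega> \<in> space M" for \<omega>
  proof (rule LIMSEQ_I)
    fix r :: real assume r: "0 < r"
    from F(6)[OF w] have "\<forall>x\<in>UNIV. \<forall>e>0. \<exists>d>0. \<forall>x'\<in>UNIV. dist x' x < d \<longrightarrow> dist (fs x' \<omega>) (fs x \<omega>) < e"
      unfolding continuous_on_iff .
    then obtain d where d: "d > 0" "\<And>x'. dist x' x0 < d \<Longrightarrow> dist (fs x' \<omega>) (fs x0 \<omega>) < r/2"
      using r by (meson UNIV_I half_gt_zero)
    from b d(1) obtain no where no: "\<And>n. n \<ge> no \<Longrightarrow> norm (b n - 0) < d"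
      unfolding LIMSEQ_iff by blast
    show "\<exists>no. \<forall>n\<ge>no. norm (A n \<omega> - 0) < r"
    proof (intro exI allI impI)
      fix n assume n: "no \<le> n"
      have t: "\<bar>fs (pt n k) \<omega> - fs x0 \<omega>\<bar> \<le> r/2" if "k \<in> {..<Suc n}" for k
      proof -
        have "\<bar>pt n k - x0\<bar> \<le> b n" using bnd that by auto
        also have "\<dots> < d" using no[OF n] by auto
        finally show ?thesis using d(2)[of "pt n k"] by (simp add: dist_real_def)
      qed
      have "A n \<omega> = (\<Sum>k<Suc n. (fs (pt n k) \<omega> - fs x0 \<omega>)) / real (Suc n)"
        unfolding A_def by (simp add: sum_subtractf field_simps)
      then have "\<bar>A n \<omega>\<bar> = \<bar>\<Sum>k<Suc n. (fs (pt n k) \<omega> - fs x0 \<omega>)\<bar> / real (Suc n)"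
        by (simp add: abs_divide del: sum.lessThan_Suc)
      also have "\<dots> \<le> (\<Sum>k<Suc n. \<bar>fs (pt n k) \<omega> - fs x0 \<omega>\<bar>) / real (Suc n)"
        by (intro divide_right_mono sum_abs) auto
      also have "\<dots> \<le> (\<Sum>k<Suc n. r/2) / real (Suc n)"
        by (intro divide_right_mono sum_mono t) auto
      also have "\<dots> = r/2" by (simp add: sum_constant del: sum.lessThan_Suc of_nat_Suc)
      finally show "norm (A n \<omega> - 0) < r" using r by simp
    qed
  qed
  have P1: "(\<lambda>m. measure M {\<omega>\<in>space M. e/2 < \<bar>A m \<omega>\<bar>}) \<longlonglongrightarrow> 0"
    by (rule ptwise_to_prob[OF F(1) Am Ac]) (use e in auto)
  have P2: "(\<lambda>m. s / (real (Suc m) * (e/2)\<^sup>2)) \<longlonglongrightarrow> 0"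
  proof -
    have "(\<lambda>m. (s / (e/2)\<^sup>2) * inverse (real (Suc m))) \<longlonglongrightarrow> (s / (e/2)\<^sup>2) * 0"
      by (intro tendsto_mult tendsto_const) (rule LIMSEQ_inverse_real_of_nat)
    then show ?thesis by (simp add: field_simps)
  qed
  show ?thesis
  proof (rule tendsto_sandwich[OF _ _ tendsto_const])
    show "(\<lambda>m. measure M {\<omega>\<in>space M. e/2 < \<bar>A m \<omega>\<bar>} + s / (real (Suc m) * (e/2)\<^sup>2)) \<longlonglongrightarrow> 0"
      using tendsto_add[OF P1 P2] by simp
    show "\<forall>\<^sub>F n in sequentially. 0 \<le> measure M {\<omega>\<in>space M. e < \<bar>(\<Sum>k<Suc n. f (pt n k) \<omega>) / real (Suc n) - fs x0 \<omega>\<bar>}"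
      by simp
    show "\<forall>\<^sub>F n in sequentially. measure M {\<omega>\<in>space M. e < \<bar>(\<Sum>k<Suc n. f (pt n k) \<omega>) / real (Suc n) - fs x0 \<omega>\<bar>}
        \<le> measure M {\<omega>\<in>space M. e/2 < \<bar>A n \<omega>\<bar>} + s / (real (Suc n) * (e/2)\<^sup>2)"
    proof (intro always_eventually allI)
      fix n
      let ?N = "{\<omega>\<in>space M. e/2 \<le> \<bar>(\<Sum>k<Suc n. fn (pt n k) \<omega>) / real (Suc n)\<bar>}"
      have split: "(\<Sum>k<Suc n. f (pt n k) \<omega>) / real (Suc n) - fs x0 \<omega> = A n \<omega> + (\<Sum>k<Suc n. fn (pt n k) \<omega>) / real (Suc n)"
        if "\<omega> \<in> space M" for \<omega>
        unfolding A_def using that by (simp add: F(5) sum.distrib add_divide_distrib)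
      have "measure M {\<omega>\<in>space M. e < \<bar>(\<Sum>k<Suc n. f (pt n k) \<omega>) / real (Suc n) - fs x0 \<omega>\<bar>}
          \<le> measure M ({\<omega>\<in>space M. e/2 < \<bar>A n \<omega>\<bar>} \<union> ?N)"
      proof (rule finite_measure_mono)
        show "{\<omega>\<in>space M. e < \<bar>(\<Sum>k<Suc n. f (pt n k) \<omega>) / real (Suc n) - fs x0 \<omega>\<bar>}
           \<subseteq> {\<omega>\<in>space M. e/2 < \<bar>A n \<omega>\<bar>} \<union> ?N"
        proof (intro subsetI)
          fix \<omega> assume w: "\<omega> \<in> {\<omega>\<in>space M. e < \<bar>(\<Sum>k<Suc n. f (pt n k) \<omega>) / real (Suc n) - fs x0 \<omega>\<bar>}"
          then have sp: "\<omega> \<in> space M" by simp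
          have "e < \<bar>A n \<omega> + (\<Sum>k<Suc n. fn (pt n k) \<omega>) / real (Suc n)\<bar>"
            using w split[OF sp] by simp
          moreover have "\<bar>A n \<omega> + (\<Sum>k<Suc n. fn (pt n k) \<omega>) / real (Suc n)\<bar> \<le> \<bar>A n \<omega>\<bar> + \<bar>(\<Sum>k<Suc n. fn (pt n k) \<omega>) / real (Suc n)\<bar>"
            by (rule abs_triangle_ineq)
          ultimately have "e/2 < \<bar>A n \<omega>\<bar> \<or> e/2 \<le> \<bar>(\<Sum>k<Suc n. fn (pt n k) \<omega>) / real (Suc n)\<bar>"
            by linarith
          then show "\<omega> \<in> {\<omega>\<in>space M. e/2 < \<bar>A n \<omega>\<bar>} \<union> ?N" using sp by blast
        qed
        show "{\<omega>\<in>space M. e/2 < \<bar>A n \<omega>\<bar>} \<union> ?N \<in> sets M" by measurable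
      qed
      also have "\<dots> \<le> measure M {\<omega>\<in>space M. e/2 < \<bar>A n \<omega>\<bar>} + measure M ?N"
        by (rule measure_Un_le) measurable
      also have "measure M ?N \<le> s / (real (Suc n) * (e/2)\<^sup>2)"
        by (rule noise_avg_prob[OF np inj]) (use e in simp)
      finally show "measure M {\<omega>\<in>space M. e < \<bar>(\<Sum>k<Suc n. f (pt n k) \<omega>) / real (Suc n) - fs x0 \<omega>\<bar>}
        \<le> measure M {\<omega>\<in>space M. e/2 < \<bar>A n \<omega>\<bar>} + s / (real (Suc n) * (e/2)\<^sup>2)" by simp
    qed
  qed
qed




lemma cdf_H:
  fixes Z Y :: "nat \<Rightarrow> 'a \<Rightarrow> real" and n :: nat
  assumes P: "prob_space M" and Z[measurable]: "\<And>i. Z i \<in> borel_measurable M"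
    and Y[measurable]: "\<And>i. Y i \<in> borel_measurable M"
  shows "measure M {\<omega>\<in>space M. \<forall>i<n. Z i \<omega> \<le> c i}
    \<le> measure M {\<omega>\<in>space M. \<forall>i<n. Y i \<omega> \<le> c i + e}
      + (\<Sum>i<n. measure M {\<omega>\<in>space M. e < \<bar>Y i \<omega> - Z i \<omega>\<bar>})"
proof -
  interpret prob_space M by (rule P)
  let ?U = "\<Union>i\<in>{..<n}. {\<omega>\<in>space M. e < \<bar>Y i \<omega> - Z i \<omega>\<bar>}"
  have U: "?U \<in> sets M" apply (rule sets.finite_UN) apply simp apply measurable done
  have "measure M {\<omega>\<in>space M. \<forall>i<n. Z i \<omega> \<le> c i}
      \<le> measure M ({\<omega>\<in>space M. \<forall>i<n. Y i \<omega> \<le> c i + e} \<union> ?U)"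
  proof (rule finite_measure_mono)
    show "{\<omega>\<in>space M. \<forall>i<n. Z i \<omega> \<le> c i} \<subseteq> {\<omega>\<in>space M. \<forall>i<n. Y i \<omega> \<le> c i + e} \<union> ?U"
    proof (intro subsetI)
      fix \<omega> assume w: "\<omega> \<in> {\<omega>\<in>space M. \<forall>i<n. Z i \<omega> \<le> c i}"
      show "\<omega> \<in> {\<omega>\<in>space M. \<forall>i<n. Y i \<omega> \<le> c i + e} \<union> ?U"
      proof (cases "\<omega> \<in> ?U")
        case False
        then have "\<forall>i<n. Y i \<omega> \<le> c i + e" using w by force
        then show ?thesis using w by auto
      qed auto
    qed
    show "{\<omega>\<in>space M. \<forall>i<n. Y i \<omega> \<le> c i + e} \<union> ?U \<in> sets M" by measurable
  qed
  also have "\<dots> \<le> measure M {\<omega>\<in>space M. \<forall>i<n. Y i \<omega> \<le> c i + e} + measure M ?U"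
    by (rule measure_Un_le) measurable
  also have "measure M ?U \<le> (\<Sum>i<n. measure M {\<omega>\<in>space M. e < \<bar>Y i \<omega> - Z i \<omega>\<bar>})"
    by (rule finite_measure_subadditive_finite) auto
  finally show ?thesis by simp
qed

lemma cdf_le:
  fixes n :: nat and ZA :: "nat \<Rightarrow> 'a \<Rightarrow> real" and YA :: "nat \<Rightarrow> nat \<Rightarrow> 'a \<Rightarrow> real"
    and ZB :: "nat \<Rightarrow> 'b \<Rightarrow> real" and YB :: "nat \<Rightarrow> nat \<Rightarrow> 'b \<Rightarrow> real"
  assumes P1: "prob_space M1" and P2: "prob_space M2"
    and [measurable]: "\<And>i. ZA i \<in> borel_measurable M1" "\<And>m i. YA m i \<in> borel_measurable M1"
    and [measurable]: "\<And>i. ZB i \<in> borel_measurable M2" "\<And>m i. YB m i \<in> borel_measurable M2"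
    and eqY: "\<And>m c. measure M1 {\<omega>\<in>space M1. \<forall>i<n. YA m i \<omega> \<le> c i} = measure M2 {\<omega>\<in>space M2. \<forall>i<n. YB m i \<omega> \<le> c i}"
    and conv1: "\<And>i e. i < n \<Longrightarrow> e > 0 \<Longrightarrow> (\<lambda>m. measure M1 {\<omega>\<in>space M1. e < \<bar>YA m i \<omega> - ZA i \<omega>\<bar>}) \<longlonglongrightarrow> 0"
    and conv2: "\<And>i e. i < n \<Longrightarrow> e > 0 \<Longrightarrow> (\<lambda>m. measure M2 {\<omega>\<in>space M2. e < \<bar>YB m i \<omega> - ZB i \<omega>\<bar>}) \<longlonglongrightarrow> 0"
  shows "measure M1 {\<omega>\<in>space M1. \<forall>i<n. ZA i \<omega> \<le> c i} \<le> measure M2 {\<omega>\<in>space M2. \<forall>i<n. ZB i \<omega> \<le> c i}"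
proof -
  interpret M2: prob_space M2 by (rule P2)
  define F2 where "F2 c' = measure M2 {\<omega>\<in>space M2. \<forall>i<n. ZB i \<omega> \<le> c' i}" for c'
  have step: "measure M1 {\<omega>\<in>space M1. \<forall>i<n. ZA i \<omega> \<le> c i} \<le> F2 (\<lambda>i. c i + 2 * e)" if e: "e > 0" for e
  proof -
    define err where "err m = (\<Sum>i<n. measure M1 {\<omega>\<in>space M1. e < \<bar>YA m i \<omega> - ZA i \<omega>\<bar>})
       + (\<Sum>i<n. measure M2 {\<omega>\<in>space M2. e < \<bar>ZB i \<omega> - YB m i \<omega>\<bar>})" for m
    have errc: "err \<longlonglongrightarrow> 0"
    proof -
      have "(\<lambda>m. (\<Sum>i<n. measure M1 {\<omega>\<in>space M1. e < \<bar>YA m i \<omega> - ZA i \<omega>\<bar>})) \<longlonglongrightarrow> (\<Sum>i<n. 0)"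
        by (intro tendsto_sum conv1 e) auto
      moreover have "(\<lambda>m. (\<Sum>i<n. measure M2 {\<omega>\<in>space M2. e < \<bar>ZB i \<omega> - YB m i \<omega>\<bar>})) \<longlonglongrightarrow> (\<Sum>i<n. 0)"
        using conv2 e by (intro tendsto_sum) (simp add: abs_minus_commute)
      ultimately show ?thesis unfolding err_def using tendsto_add by fastforce
    qed
    have bnd: "measure M1 {\<omega>\<in>space M1. \<forall>i<n. ZA i \<omega> \<le> c i} \<le> F2 (\<lambda>i. c i + 2 * e) + err m" for m
    proof -
      have "measure M1 {\<omega>\<in>space M1. \<forall>i<n. ZA i \<omega> \<le> c i}
          \<le> measure M1 {\<omega>\<in>space M1. \<forall>i<n. YA m i \<omega> \<le> c i + e}
            + (\<Sum>i<n. measure M1 {\<omega>\<in>space M1. e < \<bar>YA m i \<omega> - ZA i \<omega>\<bar>})"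
        by (rule cdf_H[OF P1]) measurable
      also have "measure M1 {\<omega>\<in>space M1. \<forall>i<n. YA m i \<omega> \<le> c i + e}
          = measure M2 {\<omega>\<in>space M2. \<forall>i<n. YB m i \<omega> \<le> c i + e}"
        by (rule eqY)
      also have "measure M2 {\<omega>\<in>space M2. \<forall>i<n. YB m i \<omega> \<le> c i + e}
          \<le> measure M2 {\<omega>\<in>space M2. \<forall>i<n. ZB i \<omega> \<le> (c i + e) + e}
            + (\<Sum>i<n. measure M2 {\<omega>\<in>space M2. e < \<bar>ZB i \<omega> - YB m i \<omega>\<bar>})"
        by (rule cdf_H[OF P2]) measurable
      finally show ?thesis unfolding F2_def err_def by (simp add: algebra_simps)
    qed
    have "(\<lambda>m. F2 (\<lambda>i. c i + 2 * e) + err m) \<longlonglongrightarrow> F2 (\<lambda>i. c i + 2 * e) + 0"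
      by (intro tendsto_add tendsto_const errc)
    then show ?thesis using bnd by (intro LIMSEQ_le_const) auto
  qed
  define D where "D k = {\<omega>\<in>space M2. \<forall>i<n. ZB i \<omega> \<le> c i + inverse (real (Suc k))}" for k
  have "D k \<in> sets M2" for k unfolding D_def by measurable
  then have Ds: "range D \<subseteq> sets M2" by auto
  have Dd: "decseq D"
    unfolding decseq_def D_def
  proof (intro allI impI subsetI)
    fix k l :: nat and \<omega> assume kl: "k \<le> l" and w: "\<omega> \<in> {\<omega>\<in>space M2. \<forall>i<n. ZB i \<omega> \<le> c i + inverse (real (Suc l))}"
    have inv: "inverse (real (Suc l)) \<le> inverse (real (Suc k))" using kl by (simp add: le_imp_inverse_le)
    have "\<forall>i<n. ZB i \<omega> \<le> c i + inverse (real (Suc k))"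
    proof (intro allI impI)
      fix i assume "i < n"
      with w have "ZB i \<omega> \<le> c i + inverse (real (Suc l))" by auto
      with inv show "ZB i \<omega> \<le> c i + inverse (real (Suc k))" by linarith
    qed
    then show "\<omega> \<in> {\<omega>\<in>space M2. \<forall>i<n. ZB i \<omega> \<le> c i + inverse (real (Suc k))}" using w by auto
  qed
  have Di: "(\<Inter>k. D k) = {\<omega>\<in>space M2. \<forall>i<n. ZB i \<omega> \<le> c i}"
  proof (intro equalityI subsetI)
    fix \<omega> assume w: "\<omega> \<in> (\<Inter>k. D k)"
    have "ZB i \<omega> \<le> c i" if i: "i < n" for i
    proof (rule LIMSEQ_le_const)
      show "(\<lambda>k. c i + inverse (real (Suc k))) \<longlonglongrightarrow> c i"
        using tendsto_add[OF tendsto_const LIMSEQ_inverse_real_of_nat, of "c i"] by simp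
      show "\<exists>N. \<forall>k\<ge>N. ZB i \<omega> \<le> c i + inverse (real (Suc k))" using w i unfolding D_def by auto
    qed
    then show "\<omega> \<in> {\<omega>\<in>space M2. \<forall>i<n. ZB i \<omega> \<le> c i}" using w unfolding D_def by auto
  next
    fix \<omega> assume "\<omega> \<in> {\<omega>\<in>space M2. \<forall>i<n. ZB i \<omega> \<le> c i}"
    then show "\<omega> \<in> (\<Inter>k. D k)" unfolding D_def
      by (auto intro: order_trans[OF _ add_increasing2[OF _ order_refl]])
  qed
  have L: "(\<lambda>k. measure M2 (D k)) \<longlonglongrightarrow> measure M2 {\<omega>\<in>space M2. \<forall>i<n. ZB i \<omega> \<le> c i}"
    using M2.finite_Lim_measure_decseq[OF Ds Dd] unfolding Di .
  show ?thesis
  proof (rule LIMSEQ_le_const[OF L], intro exI allI impI)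
    fix k :: nat
    have "measure M1 {\<omega>\<in>space M1. \<forall>i<n. ZA i \<omega> \<le> c i} \<le> F2 (\<lambda>i. c i + 2 * (inverse (real (Suc k)) / 2))"
      by (rule step) simp
    then show "measure M1 {\<omega>\<in>space M1. \<forall>i<n. ZA i \<omega> \<le> c i} \<le> measure M2 (D k)"
      unfolding F2_def D_def by simp
  qed
qed




lemma sets_PiM_atMost:
  fixes n :: nat
  defines "\<Omega> \<equiv> PiE {..<n} (\<lambda>_. UNIV :: real set)"
  shows "sets (PiM {..<n} (\<lambda>_. borel :: real measure)) = sigma_sets \<Omega> (range (\<lambda>c. {v\<in>\<Omega>. \<forall>i<n. v i \<le> c i}))"
proof -
  let ?E = "\<lambda>i::nat. range (\<lambda>a::real. {..a})"
  let ?P = "{{f\<in>(\<Pi>\<^sub>E i\<in>{..<n}. (UNIV::real set)). \<forall>i\<in>j. f i \<in> A i} | A j. j \<in> {{..<n}} \<and> A \<in> Pi j ?E}"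
  have 1: "sets (PiM {..<n} (\<lambda>_. borel :: real measure)) = sets (PiM {..<n} (\<lambda>i. sigma UNIV (?E i)))"
    by (rule sets_PiM_cong) (simp_all add: borel_eq_atMost[symmetric])
  have 2: "sets (PiM {..<n} (\<lambda>i. sigma UNIV (?E i))) = sets (sigma (\<Pi>\<^sub>E i\<in>{..<n}. UNIV) ?P)"
    apply (rule sets_PiM_sigma)
    subgoal for i
      apply (rule exI[of _ "range (\<lambda>k::nat. {..real k})"])
      apply (auto intro: real_arch_simple)
      done
    subgoal by simp
    subgoal by simp
    subgoal by simp
    done
  have PE: "?P = range (\<lambda>c. {v\<in>\<Omega>. \<forall>i<n. v i \<le> c i})"
  proof (intro equalityI subsetI)
    fix X assume "X \<in> ?P"
    then obtain A j where X: "X = {f\<in>(\<Pi>\<^sub>E i\<in>{..<n}. (UNIV::real set)). \<forall>i\<in>j. f i \<in> A i}"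
      and j: "j \<in> {{..<n}}" and A: "A \<in> Pi j ?E"
      by blast
    have j': "j = {..<n}" using j by simp
    define c where "c i = (SOME a. A i = {..a})" for i
    have c: "A i = {..c i}" if "i < n" for i
    proof -
      have "A i \<in> ?E i" using A j' that by (simp add: Pi_def)
      then have "\<exists>a. A i = {..a}" by blast
      then show ?thesis unfolding c_def by (rule someI_ex)
    qed
    have "X = {v\<in>\<Omega>. \<forall>i<n. v i \<le> c i}"
    proof (intro equalityI subsetI)
      fix v assume "v \<in> X"
      then show "v \<in> {v\<in>\<Omega>. \<forall>i<n. v i \<le> c i}" unfolding X j' \<Omega>_def using c by simp
    next
      fix v assume "v \<in> {v\<in>\<Omega>. \<forall>i<n. v i \<le> c i}"
      then show "v \<in> X" unfolding X j' \<Omega>_def using c by simp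
    qed
    then show "X \<in> range (\<lambda>c. {v\<in>\<Omega>. \<forall>i<n. v i \<le> c i})"
      by (intro image_eqI[where x=c]) simp_all
  next
    fix X assume "X \<in> range (\<lambda>c. {v\<in>\<Omega>. \<forall>i<n. v i \<le> c i})"
    then obtain c where X: "X = {v\<in>\<Omega>. \<forall>i<n. v i \<le> c i}" by blast
    have "X = {f\<in>(\<Pi>\<^sub>E i\<in>{..<n}. (UNIV::real set)). \<forall>i\<in>{..<n}. f i \<in> (\<lambda>i. {..c i}) i}"
      unfolding X \<Omega>_def by (simp add: Ball_def)
    moreover have "(\<lambda>i. {..c i}) \<in> Pi {..<n} ?E" by simp
    ultimately show "X \<in> ?P"
      unfolding mem_Collect_eq by (intro exI[of _ "\<lambda>i. {..c i}"] exI[of _ "{..<n}"] conjI) simp_all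
  qed
  have 3: "sets (sigma (\<Pi>\<^sub>E i\<in>{..<n}. UNIV) ?P) = sigma_sets \<Omega> ?P"
    unfolding \<Omega>_def by (rule sets_measure_of) auto
  show ?thesis using 1 2 3 PE by simp
qed

lemma distr_eq_cdf:
  fixes n :: nat and Z1 :: "nat \<Rightarrow> 'a \<Rightarrow> real" and Z2 :: "nat \<Rightarrow> 'b \<Rightarrow> real"
  assumes P1: "prob_space M1" and P2: "prob_space M2"
    and [measurable]: "\<And>i. Z1 i \<in> borel_measurable M1" "\<And>i. Z2 i \<in> borel_measurable M2"
    and eq: "\<And>c. measure M1 {\<omega>\<in>space M1. \<forall>i<n. Z1 i \<omega> \<le> c i} = measure M2 {\<omega>\<in>space M2. \<forall>i<n. Z2 i \<omega> \<le> c i}"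
  shows "distr M1 (PiM {..<n} (\<lambda>_. borel)) (\<lambda>\<omega>. \<lambda>i\<in>{..<n}. Z1 i \<omega>)
       = distr M2 (PiM {..<n} (\<lambda>_. borel)) (\<lambda>\<omega>. \<lambda>i\<in>{..<n}. Z2 i \<omega>)"
proof -
  interpret M1: prob_space M1 by (rule P1)
  interpret M2: prob_space M2 by (rule P2)
  define \<Omega> where "\<Omega> = PiE {..<n} (\<lambda>_. UNIV :: real set)"
  define E where "E = range (\<lambda>c. {v\<in>\<Omega>. \<forall>i<n. v i \<le> c i})"
  have SE: "sets (PiM {..<n} (\<lambda>_. borel :: real measure)) = sigma_sets \<Omega> E"
    unfolding E_def \<Omega>_def by (rule sets_PiM_atMost)
  have V1: "(\<lambda>\<omega>. \<lambda>i\<in>{..<n}. Z1 i \<omega>) \<in> measurable M1 (PiM {..<n} (\<lambda>_. borel))"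
    by (rule measurable_restrict) simp
  have V2: "(\<lambda>\<omega>. \<lambda>i\<in>{..<n}. Z2 i \<omega>) \<in> measurable M2 (PiM {..<n} (\<lambda>_. borel))"
    by (rule measurable_restrict) simp
  define A where "A k = {v\<in>\<Omega>. \<forall>i<n. v i \<le> real k}" for k :: nat
  show ?thesis
  proof (rule measure_eqI_generator_eq[where E=E and \<Omega>=\<Omega> and A=A])
    show "Int_stable E"
    proof (rule Int_stableI)
      fix a b assume "a \<in> E" "b \<in> E"
      then obtain c d where a: "a = {v\<in>\<Omega>. \<forall>i<n. v i \<le> c i}" and b: "b = {v\<in>\<Omega>. \<forall>i<n. v i \<le> d i}"
        unfolding E_def by blast
      have "a \<inter> b = {v\<in>\<Omega>. \<forall>i<n. v i \<le> min (c i) (d i)}" unfolding a b by auto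
      moreover have "{v\<in>\<Omega>. \<forall>i<n. v i \<le> min (c i) (d i)} \<in> E"
        unfolding E_def image_iff by (intro bexI[of _ "\<lambda>i. min (c i) (d i)"]) auto
      ultimately show "a \<inter> b \<in> E" by simp
    qed
    show "E \<subseteq> Pow \<Omega>" unfolding E_def by auto
    show "sets (distr M1 (PiM {..<n} (\<lambda>_. borel)) (\<lambda>\<omega>. \<lambda>i\<in>{..<n}. Z1 i \<omega>)) = sigma_sets \<Omega> E"
      using SE by simp
    show "sets (distr M2 (PiM {..<n} (\<lambda>_. borel)) (\<lambda>\<omega>. \<lambda>i\<in>{..<n}. Z2 i \<omega>)) = sigma_sets \<Omega> E"
      using SE by simp
    show "range A \<subseteq> E" unfolding A_def E_def by auto
    show "(\<Union>k. A k) = \<Omega>"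
    proof (intro equalityI subsetI)
      fix v assume v: "v \<in> \<Omega>"
      have "\<forall>i<n. v i \<le> real (nat \<lceil>\<Sum>j<n. \<bar>v j\<bar>\<rceil>)"
      proof (intro allI impI)
        fix i assume "i < n"
        then have "\<bar>v i\<bar> \<le> (\<Sum>j<n. \<bar>v j\<bar>)"
          by (intro member_le_sum) auto
        then show "v i \<le> real (nat \<lceil>\<Sum>j<n. \<bar>v j\<bar>\<rceil>)" by linarith
      qed
      then show "v \<in> (\<Union>k. A k)" using v unfolding A_def by blast
    qed (auto simp: A_def)
    show "emeasure (distr M1 (PiM {..<n} (\<lambda>_. borel)) (\<lambda>\<omega>. \<lambda>i\<in>{..<n}. Z1 i \<omega>)) (A k) \<noteq> \<infinity>" for k
    proof -
      interpret D: prob_space "distr M1 (PiM {..<n} (\<lambda>_. borel)) (\<lambda>\<omega>. \<lambda>i\<in>{..<n}. Z1 i \<omega>)"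
        by (rule M1.prob_space_distr[OF V1])
      show ?thesis using D.emeasure_finite[of "A k"] by simp
    qed
    fix X assume "X \<in> E"
    then obtain c where X: "X = {v\<in>\<Omega>. \<forall>i<n. v i \<le> c i}" unfolding E_def by blast
    have Xs: "X \<in> sets (PiM {..<n} (\<lambda>_. borel :: real measure))"
      unfolding SE using \<open>X \<in> E\<close> by auto
    have pre1: "(\<lambda>\<omega>. \<lambda>i\<in>{..<n}. Z1 i \<omega>) -` X \<inter> space M1 = {\<omega>\<in>space M1. \<forall>i<n. Z1 i \<omega> \<le> c i}"
      unfolding X \<Omega>_def by auto
    have pre2: "(\<lambda>\<omega>. \<lambda>i\<in>{..<n}. Z2 i \<omega>) -` X \<inter> space M2 = {\<omega>\<in>space M2. \<forall>i<n. Z2 i \<omega> \<le> c i}"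
      unfolding X \<Omega>_def by auto
    show "emeasure (distr M1 (PiM {..<n} (\<lambda>_. borel)) (\<lambda>\<omega>. \<lambda>i\<in>{..<n}. Z1 i \<omega>)) X
        = emeasure (distr M2 (PiM {..<n} (\<lambda>_. borel)) (\<lambda>\<omega>. \<lambda>i\<in>{..<n}. Z2 i \<omega>)) X"
      using eq[of c] by (simp add: emeasure_distr[OF V1 Xs] emeasure_distr[OF V2 Xs] pre1 pre2
          M1.emeasure_eq_measure M2.emeasure_eq_measure)
  qed
qed




lemma sep_exists:
  fixes x :: "nat \<Rightarrow> real"
  assumes inj: "inj_on x {..<n}"
  shows "\<exists>d>0. \<forall>i j. i < n \<longrightarrow> j < n \<longrightarrow> i \<noteq> j \<longrightarrow> d \<le> \<bar>x i - x j\<bar>"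
proof -
  define D where "D = {p \<in> {..<n} \<times> {..<n}. fst p \<noteq> snd p}"
  define S where "S = insert 1 ((\<lambda>p. \<bar>x (fst p) - x (snd p)\<bar>) ` D)"
  have fD: "finite D" unfolding D_def by (rule finite_subset[of _ "{..<n} \<times> {..<n}"]) auto
  have fin: "finite S" unfolding S_def using fD by simp
  have pos: "a > 0" if "a \<in> S" for a
  proof -
    have "a = 1 \<or> (\<exists>p\<in>D. a = \<bar>x (fst p) - x (snd p)\<bar>)" using that unfolding S_def by blast
    then show ?thesis
    proof
      assume "\<exists>p\<in>D. a = \<bar>x (fst p) - x (snd p)\<bar>"
      then obtain p where p: "p \<in> D" "a = \<bar>x (fst p) - x (snd p)\<bar>" by blast
      then have "x (fst p) \<noteq> x (snd p)" using inj unfolding D_def inj_on_def by auto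
      then show ?thesis using p by simp
    qed simp
  qed
  have "Min S > 0" using fin pos by (subst Min_gr_iff) (auto simp: S_def)
  moreover have "Min S \<le> \<bar>x i - x j\<bar>" if "i < n" "j < n" "i \<noteq> j" for i j
  proof (rule Min_le[OF fin])
    have "(i, j) \<in> D" unfolding D_def using that by simp
    then show "\<bar>x i - x j\<bar> \<in> S" unfolding S_def by force
  qed
  ultimately show ?thesis by blast
qed

lemma comp_meas_any: "(\<lambda>v. v j) \<in> borel_measurable (PiM I (\<lambda>_. borel :: real measure))"
proof (cases "j \<in> I")
  case True then show ?thesis by simp
next
  case False
  have c: "(\<lambda>v::'a \<Rightarrow> real. undefined :: real) \<in> borel_measurable (PiM I (\<lambda>_. borel :: real measure))" by simp
  have "\<And>v. v \<in> space (PiM I (\<lambda>_. borel :: real measure)) \<Longrightarrow> v j = undefined"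
    using False by (auto simp: space_PiM PiE_def extensional_def)
  then show ?thesis using c by (subst measurable_cong[where g="\<lambda>v. undefined"]) auto
qed

lemma fdd_event_eq:
  fixes N n :: nat and G :: "nat \<Rightarrow> (nat \<Rightarrow> real) \<Rightarrow> real" and c :: "nat \<Rightarrow> real"
  assumes np1: "noisy_process M1 f1 f1s f1n s1" and np2: "noisy_process M2 f2 f2s f2n s2"
    and hyp: "\<forall>n x. inj_on x {..<n} \<longrightarrow> fin_distr M1 f1 n x = fin_distr M2 f2 n x"
    and inj: "inj_on p {..<N}"
    and G[measurable]: "\<And>i. G i \<in> borel_measurable (PiM {..<N} (\<lambda>_. borel))"
  shows "measure M1 {\<omega>\<in>space M1. \<forall>i<n. G i (\<lambda>j\<in>{..<N}. f1 (p j) \<omega>) \<le> c i}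
       = measure M2 {\<omega>\<in>space M2. \<forall>i<n. G i (\<lambda>j\<in>{..<N}. f2 (p j) \<omega>) \<le> c i}"
proof -
  have [measurable]: "\<And>x. f1 x \<in> borel_measurable M1" by (rule np_f_meas[OF np1])
  have [measurable]: "\<And>x. f2 x \<in> borel_measurable M2" by (rule np_f_meas[OF np2])
  define B where "B = {v\<in>space (PiM {..<N} (\<lambda>_. borel :: real measure)). \<forall>i<n. G i v \<le> c i}"
  have B: "B \<in> sets (PiM {..<N} (\<lambda>_. borel))" unfolding B_def by measurable
  have V1: "(\<lambda>\<omega>. \<lambda>j\<in>{..<N}. f1 (p j) \<omega>) \<in> measurable M1 (PiM {..<N} (\<lambda>_. borel))"
    by (rule measurable_restrict) simp
  have V2: "(\<lambda>\<omega>. \<lambda>j\<in>{..<N}. f2 (p j) \<omega>) \<in> measurable M2 (PiM {..<N} (\<lambda>_. borel))"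
    by (rule measurable_restrict) simp
  have "measure M1 {\<omega>\<in>space M1. \<forall>i<n. G i (\<lambda>j\<in>{..<N}. f1 (p j) \<omega>) \<le> c i} = measure (fin_distr M1 f1 N p) B"
    unfolding fin_distr_def using measurable_space[OF V1]
    by (subst measure_distr[OF V1 B]) (auto intro!: arg_cong[where f="measure M1"] simp: B_def)
  also have "\<dots> = measure (fin_distr M2 f2 N p) B" using hyp inj by simp
  also have "\<dots> = measure M2 {\<omega>\<in>space M2. \<forall>i<n. G i (\<lambda>j\<in>{..<N}. f2 (p j) \<omega>) \<le> c i}"
    unfolding fin_distr_def using measurable_space[OF V2]
    by (subst measure_distr[OF V2 B]) (auto intro!: arg_cong[where f="measure M2"] simp: B_def)
  finally show ?thesis .
qed

lemma idx_lt: "i < n \<Longrightarrow> k < Suc m \<Longrightarrow> n + i * Suc m + k < n + n * Suc m"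
proof -
  assume a: "i < n" "k < Suc m"
  then have "i * Suc m + k < Suc i * Suc m" by simp
  also have "\<dots> \<le> n * Suc m" using a by (intro mult_right_mono) auto
  finally show ?thesis by simp
qed


lemma idx_div: "k < Suc m \<Longrightarrow> (n + i * Suc m + k - n) div Suc m = (i::nat)"
proof -
  assume k: "k < Suc m"
  have "n + i * Suc m + k - n = k + Suc m * i" by simp
  then show ?thesis using k by (simp del: mult_Suc_right mult_Suc add: div_mult_self2)
qed
lemma idx_mod: "k < Suc m \<Longrightarrow> (n + i * Suc m + k - n) mod Suc m = (k::nat)"
proof -
  assume k: "k < Suc m"
  have "n + i * Suc m + k - n = k + Suc m * i" by simp
  then show ?thesis using k by (simp del: mult_Suc_right mult_Suc)
qed




theorem mainTheorem5:
  fixes M1 :: "'a measure" and M2 :: "'b measure"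
    and f1 f1s f1n :: "real \<Rightarrow> 'a \<Rightarrow> real"
    and f2 f2s f2n :: "real \<Rightarrow> 'b \<Rightarrow> real"
    and s1 s2 :: real
  assumes "noisy_process M1 f1 f1s f1n s1"
    and "noisy_process M2 f2 f2s f2n s2"
    and "\<forall>n x. inj_on x {..<n} \<longrightarrow> fin_distr M1 f1 n x = fin_distr M2 f2 n x"
  shows "\<forall>n x. inj_on x {..<n} \<longrightarrow>
           fin_distr M1 f1s n x = fin_distr M2 f2s n x \<and>
           fin_distr M1 f1n n x = fin_distr M2 f2n n x"
proof (intro allI impI)
  fix n :: nat and x :: "nat \<Rightarrow> real" assume inj: "inj_on x {..<n}"
  note np1 = assms(1) and np2 = assms(2) and hyp = assms(3)
  note F1 = np_facts[OF np1] and F2 = np_facts[OF np2]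
  have [measurable]: "\<And>y. f1 y \<in> borel_measurable M1" by (rule np_f_meas[OF np1])
  have [measurable]: "\<And>y. f2 y \<in> borel_measurable M2" by (rule np_f_meas[OF np2])
  have [measurable]: "\<And>y. f1s y \<in> borel_measurable M1" "\<And>y. f1n y \<in> borel_measurable M1"
    using F1 by auto
  have [measurable]: "\<And>y. f2s y \<in> borel_measurable M2" "\<And>y. f2n y \<in> borel_measurable M2"
    using F2 by auto
  obtain d where d: "d > 0" "\<And>i j. i < n \<Longrightarrow> j < n \<Longrightarrow> i \<noteq> j \<Longrightarrow> d \<le> \<bar>x i - x j\<bar>"
    using sep_exists[OF inj] by blast
  define h :: "nat \<Rightarrow> real" where "h m = d / (2 * (real m + 1)^2)" for m
  define pt where "pt m i k = x i + real (Suc k) * h m" for m i k :: nat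
  define b :: "nat \<Rightarrow> real" where "b m = d / (2 * (real m + 1))" for m
  have hpos: "h m > 0" for m unfolding h_def using d by simp
  have off: "real (Suc k) * h m \<le> b m" if "k < Suc m" for k m
  proof -
    have "real (Suc k) * h m \<le> (real m + 1) * h m"
      using that hpos[of m] by (intro mult_right_mono) auto
    also have "(real m + 1) * h m = b m"
    proof -
      have p: "real m + 1 > 0" by simp
      show ?thesis unfolding h_def b_def using p by (simp add: power2_eq_square)
    qed
    finally show ?thesis .
  qed
  have bd: "b m < d" for m
  proof -
    have "b m \<le> d / 2" unfolding b_def using d by (intro divide_left_mono) auto
    then show ?thesis using d by simp
  qed
  have b0: "b \<longlonglongrightarrow> 0"
  proof -
    have L: "(\<lambda>m. (d/2) * inverse (real (Suc m))) \<longlonglongrightarrow> (d/2) * 0"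
      by (intro tendsto_mult tendsto_const LIMSEQ_inverse_real_of_nat)
    have eq: "b = (\<lambda>m. (d/2) * inverse (real (Suc m)))"
      unfolding b_def by (auto simp: field_simps)
    show ?thesis unfolding eq using L by simp
  qed
  have offpos: "0 < real (Suc k) * h m" for k m using hpos[of m] by simp
  have ptb: "\<bar>pt m i k - x i\<bar> \<le> b m" if "k < Suc m" for m i k
    using off[OF that] offpos[of k m] unfolding pt_def by simp
  have ptinj: "inj_on (pt m i) {..<Suc m}" for m i
    unfolding pt_def inj_on_def using hpos[of m] by auto
  define Q where "Q m = n + n * Suc m" for m
  define q where "q m j = (if j < n then x j else pt m ((j - n) div Suc m) ((j - n) mod Suc m))" for m j
  have qx: "q m i = x i" if "i < n" for m i using that unfolding q_def by simp
  have qpt: "q m (n + i * Suc m + k) = pt m i k" if "k < Suc m" for m i k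
    using that idx_div[OF that, of n i] idx_mod[OF that, of n i] unfolding q_def by simp
  have decode: "\<exists>i k. i < n \<and> k < Suc m \<and> j = n + i * Suc m + k" if "n \<le> j" "j < Q m" for m j
  proof (intro exI conjI)
    show "(j - n) div Suc m < n" using that unfolding Q_def
      by (simp add: less_mult_imp_div_less)
    show "(j - n) mod Suc m < Suc m" by simp
    have "(j - n) div Suc m * Suc m + (j - n) mod Suc m = j - n" by (rule div_mult_mod_eq)
    then show "j = n + (j - n) div Suc m * Suc m + (j - n) mod Suc m"
      using that by linarith
  qed
  have qinj: "inj_on (q m) {..<Q m}" for m
  proof (rule inj_onI)
    fix j j' assume j: "j \<in> {..<Q m}" and j': "j' \<in> {..<Q m}" and eq: "q m j = q m j'"
    have hb: "0 < real (Suc k) * h m \<and> real (Suc k) * h m < d" if "k < Suc m" for k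
      using off[OF that] bd[of m] offpos[of k m] by simp
    show "j = j'"
    proof (cases "j < n")
      case True
      show ?thesis
      proof (cases "j' < n")
        case True
        with \<open>j < n\<close> eq inj show ?thesis by (auto simp: qx inj_on_def)
      next
        case False
        then obtain i' k' where ik': "i' < n" "k' < Suc m" "j' = n + i' * Suc m + k'"
          using decode[of j' m] j' by auto
        have e: "x j = x i' + real (Suc k') * h m"
        proof -
          have "q m j' = pt m i' k'" unfolding ik'(3) by (rule qpt[OF ik'(2)])
          then show ?thesis using eq qx[OF \<open>j < n\<close>] by (simp add: pt_def)
        qed
        show ?thesis
        proof (cases "i' = j")
          case True then show ?thesis using e hb[OF ik'(2)] by simp
        next
          case False
          then have "d \<le> \<bar>x j - x i'\<bar>" using d(2)[of j i'] \<open>j < n\<close> ik' by auto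
          then show ?thesis using e hb[OF ik'(2)] by simp
        qed
      qed
    next
      case False
      then obtain i k where ik: "i < n" "k < Suc m" "j = n + i * Suc m + k"
        using decode[of j m] j by auto
      show ?thesis
      proof (cases "j' < n")
        case True
        have e: "x j' = x i + real (Suc k) * h m"
        proof -
          have "q m j = pt m i k" unfolding ik(3) by (rule qpt[OF ik(2)])
          then show ?thesis using eq qx[OF True] by (simp add: pt_def)
        qed
        show ?thesis
        proof (cases "i = j'")
          case True then show ?thesis using e hb[OF ik(2)] by simp
        next
          case False
          then have "d \<le> \<bar>x j' - x i\<bar>" using d(2)[of j' i] \<open>j' < n\<close> ik by auto
          then show ?thesis using e hb[OF ik(2)] by simp
        qed
      next
        case False
        then obtain i' k' where ik': "i' < n" "k' < Suc m" "j' = n + i' * Suc m + k'"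
          using decode[of j' m] j' by auto
        have e: "x i + real (Suc k) * h m = x i' + real (Suc k') * h m"
        proof -
          have "q m j = pt m i k" unfolding ik(3) by (rule qpt[OF ik(2)])
          moreover have "q m j' = pt m i' k'" unfolding ik'(3) by (rule qpt[OF ik'(2)])
          ultimately show ?thesis using eq by (simp add: pt_def)
        qed
        show ?thesis
        proof (cases "i = i'")
          case True
          then have "real (Suc k) * h m = real (Suc k') * h m" using e by simp
          then have "k = k'" using hpos[of m] by simp
          then show ?thesis using ik ik' True by simp
        next
          case False
          then have "d \<le> \<bar>x i - x i'\<bar>" using d(2)[of i i'] ik ik' by auto
          then show ?thesis using e hb[OF ik(2)] hb[OF ik'(2)] by linarith
        qed
      qed
    qed
  qed
  define Y1 where "Y1 m i \<omega> = (\<Sum>k<Suc m. f1 (pt m i k) \<omega>) / real (Suc m)" for m i \<omega>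
  define Y2 where "Y2 m i \<omega> = (\<Sum>k<Suc m. f2 (pt m i k) \<omega>) / real (Suc m)" for m i \<omega>
  have Y1m[measurable]: "Y1 m i \<in> borel_measurable M1" for m i unfolding Y1_def by measurable
  have Y2m[measurable]: "Y2 m i \<in> borel_measurable M2" for m i unfolding Y2_def by measurable
  define G where "G m i v = (\<Sum>k<Suc m. v (n + i * Suc m + k)) / real (Suc m)" for m i and v :: "nat \<Rightarrow> real"
  have Gm[measurable]: "G m i \<in> borel_measurable (PiM {..<Q m} (\<lambda>_. borel))" for m i
    unfolding G_def by (intro borel_measurable_divide borel_measurable_sum comp_meas_any borel_measurable_const)
  have GY1: "G m i (\<lambda>j\<in>{..<Q m}. f1 (q m j) \<omega>) = Y1 m i \<omega>" if "i < n" for m i \<omega>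
    unfolding G_def Y1_def using that idx_lt[OF that, of _ m] qpt[of _ m i]
    by (intro arg_cong2[where f="(/)"] sum.cong) (auto simp: Q_def)
  have GY2: "G m i (\<lambda>j\<in>{..<Q m}. f2 (q m j) \<omega>) = Y2 m i \<omega>" if "i < n" for m i \<omega>
    unfolding G_def Y2_def using that idx_lt[OF that, of _ m] qpt[of _ m i]
    by (intro arg_cong2[where f="(/)"] sum.cong) (auto simp: Q_def)
  have eqY: "measure M1 {\<omega>\<in>space M1. \<forall>i<n. Y1 m i \<omega> \<le> c i} = measure M2 {\<omega>\<in>space M2. \<forall>i<n. Y2 m i \<omega> \<le> c i}" for m c
  proof -
    have "measure M1 {\<omega>\<in>space M1. \<forall>i<n. G m i (\<lambda>j\<in>{..<Q m}. f1 (q m j) \<omega>) \<le> c i}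
        = measure M2 {\<omega>\<in>space M2. \<forall>i<n. G m i (\<lambda>j\<in>{..<Q m}. f2 (q m j) \<omega>) \<le> c i}"
      by (rule fdd_event_eq[OF np1 np2 hyp qinj[of m]]) (rule Gm)
    then show ?thesis by (simp add: GY1 GY2 cong: conj_cong)
  qed
  have conv1: "(\<lambda>m. measure M1 {\<omega>\<in>space M1. e < \<bar>Y1 m i \<omega> - f1s (x i) \<omega>\<bar>}) \<longlonglongrightarrow> 0" if "e > 0" for i e
    unfolding Y1_def by (rule avg_conv[OF np1 ptinj ptb b0 that])
  have conv2: "(\<lambda>m. measure M2 {\<omega>\<in>space M2. e < \<bar>Y2 m i \<omega> - f2s (x i) \<omega>\<bar>}) \<longlonglongrightarrow> 0" if "e > 0" for i e
    unfolding Y2_def by (rule avg_conv[OF np2 ptinj ptb b0 that])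
  have cdfS: "measure M1 {\<omega>\<in>space M1. \<forall>i<n. f1s (x i) \<omega> \<le> c i} = measure M2 {\<omega>\<in>space M2. \<forall>i<n. f2s (x i) \<omega> \<le> c i}" for c
  proof (rule antisym)
    show "measure M1 {\<omega>\<in>space M1. \<forall>i<n. f1s (x i) \<omega> \<le> c i} \<le> measure M2 {\<omega>\<in>space M2. \<forall>i<n. f2s (x i) \<omega> \<le> c i}"
      apply (rule cdf_le[OF F1(1) F2(1), where YA=Y1 and YB=Y2])
      apply (rule F1(3) Y1m F2(3) Y2m)+
      apply (rule eqY)
      apply (rule conv1, assumption)
      apply (rule conv2, assumption)
      done
    show "measure M2 {\<omega>\<in>space M2. \<forall>i<n. f2s (x i) \<omega> \<le> c i} \<le> measure M1 {\<omega>\<in>space M1. \<forall>i<n. f1s (x i) \<omega> \<le> c i}"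
      apply (rule cdf_le[OF F2(1) F1(1), where YA=Y2 and YB=Y1])
      apply (rule F1(3) Y1m F2(3) Y2m)+
      apply (rule eqY[symmetric])
      apply (rule conv2, assumption)
      apply (rule conv1, assumption)
      done
  qed
  define W1 where "W1 m i \<omega> = f1 (x i) \<omega> - Y1 m i \<omega>" for m i \<omega>
  define W2 where "W2 m i \<omega> = f2 (x i) \<omega> - Y2 m i \<omega>" for m i \<omega>
  have W1m[measurable]: "W1 m i \<in> borel_measurable M1" for m i unfolding W1_def by measurable
  have W2m[measurable]: "W2 m i \<in> borel_measurable M2" for m i unfolding W2_def by measurable
  define H where "H m i v = v i - G m i v" for m i and v :: "nat \<Rightarrow> real"
  have Hm[measurable]: "H m i \<in> borel_measurable (PiM {..<Q m} (\<lambda>_. borel))" for m i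
    unfolding H_def using Gm[of m i] by (intro borel_measurable_diff comp_meas_any)
  have iQ: "i < Q m" if "i < n" for i m using that unfolding Q_def by simp
  have HW1: "H m i (\<lambda>j\<in>{..<Q m}. f1 (q m j) \<omega>) = W1 m i \<omega>" if "i < n" for m i \<omega>
    unfolding H_def W1_def using GY1[OF that] iQ[OF that] qx[OF that] by simp
  have HW2: "H m i (\<lambda>j\<in>{..<Q m}. f2 (q m j) \<omega>) = W2 m i \<omega>" if "i < n" for m i \<omega>
    unfolding H_def W2_def using GY2[OF that] iQ[OF that] qx[OF that] by simp
  have eqW: "measure M1 {\<omega>\<in>space M1. \<forall>i<n. W1 m i \<omega> \<le> c i} = measure M2 {\<omega>\<in>space M2. \<forall>i<n. W2 m i \<omega> \<le> c i}" for m c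
  proof -
    have "measure M1 {\<omega>\<in>space M1. \<forall>i<n. H m i (\<lambda>j\<in>{..<Q m}. f1 (q m j) \<omega>) \<le> c i}
        = measure M2 {\<omega>\<in>space M2. \<forall>i<n. H m i (\<lambda>j\<in>{..<Q m}. f2 (q m j) \<omega>) \<le> c i}"
      by (rule fdd_event_eq[OF np1 np2 hyp qinj[of m]]) (rule Hm)
    then show ?thesis by (simp add: HW1 HW2 cong: conj_cong)
  qed
  have convW1: "(\<lambda>m. measure M1 {\<omega>\<in>space M1. e < \<bar>W1 m i \<omega> - f1n (x i) \<omega>\<bar>}) \<longlonglongrightarrow> 0" if "e > 0" for i e
  proof -
    have "{\<omega>\<in>space M1. e < \<bar>W1 m i \<omega> - f1n (x i) \<omega>\<bar>} = {\<omega>\<in>space M1. e < \<bar>Y1 m i \<omega> - f1s (x i) \<omega>\<bar>}" for m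
      unfolding W1_def by (auto simp: F1(5) abs_minus_commute)
    then show ?thesis using conv1[OF that] by simp
  qed
  have convW2: "(\<lambda>m. measure M2 {\<omega>\<in>space M2. e < \<bar>W2 m i \<omega> - f2n (x i) \<omega>\<bar>}) \<longlonglongrightarrow> 0" if "e > 0" for i e
  proof -
    have "{\<omega>\<in>space M2. e < \<bar>W2 m i \<omega> - f2n (x i) \<omega>\<bar>} = {\<omega>\<in>space M2. e < \<bar>Y2 m i \<omega> - f2s (x i) \<omega>\<bar>}" for m
      unfolding W2_def by (auto simp: F2(5) abs_minus_commute)
    then show ?thesis using conv2[OF that] by simp
  qed
  have cdfN: "measure M1 {\<omega>\<in>space M1. \<forall>i<n. f1n (x i) \<omega> \<le> c i} = measure M2 {\<omega>\<in>space M2. \<forall>i<n. f2n (x i) \<omega> \<le> c i}" for c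
  proof (rule antisym)
    show "measure M1 {\<omega>\<in>space M1. \<forall>i<n. f1n (x i) \<omega> \<le> c i} \<le> measure M2 {\<omega>\<in>space M2. \<forall>i<n. f2n (x i) \<omega> \<le> c i}"
      apply (rule cdf_le[OF F1(1) F2(1), where YA=W1 and YB=W2])
      apply (rule F1(4) W1m F2(4) W2m)+
      apply (rule eqW)
      apply (rule convW1, assumption)
      apply (rule convW2, assumption)
      done
    show "measure M2 {\<omega>\<in>space M2. \<forall>i<n. f2n (x i) \<omega> \<le> c i} \<le> measure M1 {\<omega>\<in>space M1. \<forall>i<n. f1n (x i) \<omega> \<le> c i}"
      apply (rule cdf_le[OF F2(1) F1(1), where YA=W2 and YB=W1])
      apply (rule F1(4) W1m F2(4) W2m)+
      apply (rule eqW[symmetric])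
      apply (rule convW2, assumption)
      apply (rule convW1, assumption)
      done
  qed
  show "fin_distr M1 f1s n x = fin_distr M2 f2s n x \<and> fin_distr M1 f1n n x = fin_distr M2 f2n n x"
    unfolding fin_distr_def
  proof (intro conjI)
    show "distr M1 (PiM {..<n} (\<lambda>_. borel)) (\<lambda>\<omega>. \<lambda>i\<in>{..<n}. f1s (x i) \<omega>) = distr M2 (PiM {..<n} (\<lambda>_. borel)) (\<lambda>\<omega>. \<lambda>i\<in>{..<n}. f2s (x i) \<omega>)"
      by (rule distr_eq_cdf[OF F1(1) F2(1) F1(3) F2(3) cdfS])
    show "distr M1 (PiM {..<n} (\<lambda>_. borel)) (\<lambda>\<omega>. \<lambda>i\<in>{..<n}. f1n (x i) \<omega>) = distr M2 (PiM {..<n} (\<lambda>_. borel)) (\<lambda>\<omega>. \<lambda>i\<in>{..<n}. f2n (x i) \<omega>)"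
      by (rule distr_eq_cdf[OF F1(1) F2(1) F1(4) F2(4) cdfN])
  qed
qed


end
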